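(* Let $G$ be a directed graph with vertices $s,t$ and let $k\ge1$. For every $C\in U^k$ there exists $\hat C\in U^k_{\mathrm{lr}}$ such that $\mu_e(C)=\mu_e(\hat C)$ for all $e\in E(G)$.
   Context: An $s$-$t$ cut of a directed graph $G$ is a set $X\subseteq E(G)$ such that removing $X$ leaves no directed $s$-$t$ path; $\Gamma_G(s,t)$ is the set of $s$-$t$ cuts of minimum cardinality. For $s$-$t$ cuts $X,Y$, write $X\le Y$ if every directed $s$-$t$ path in $G$ meets an edge of $X$ at or before (along the path) an edge of $Y$. $U^k$ denotes the set of $k$-tuples $[X_1,\dots,X_k]$ with each $X_i\in\Gamma_G(s,t)$, and $U^k_{\mathrm{lr}}\subseteq U^k$ the set of those in left-right order, i.e. with $X_i\le X_j$ for all $i<j$. For $C=[X_1,\dots,X_k]$ and $e\in E(G)$, the multiplicity $\mu_e(C)$ is the number of indices $i$ with $e\in X_i$. *)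

theory Defs
  imports "Graph_Theory.Digraph" "Graph_Theory.Arc_Walk"
begin

definition st_cut :: "('a,'b) pre_digraph \<Rightarrow> 'a \<Rightarrow> 'a \<Rightarrow> 'b set \<Rightarrow> bool" where
  "st_cut G s t X \<longleftrightarrow> X \<subseteq> arcs G \<and>
     (\<forall>p. pre_digraph.apath G s p t \<longrightarrow> set p \<inter> X \<noteq> {})"

definition min_cuts :: "('a,'b) pre_digraph \<Rightarrow> 'a \<Rightarrow> 'a \<Rightarrow> 'b set set" where
  "min_cuts G s t = {X. st_cut G s t X \<and> (\<forall>Y. st_cut G s t Y \<longrightarrow> card X \<le> card Y)}"

definition cut_le :: "('a,'b) pre_digraph \<Rightarrow> 'a \<Rightarrow> 'a \<Rightarrow> 'b set \<Rightarrow> 'b set \<Rightarrow> bool" where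
  "cut_le G s t X Y \<longleftrightarrow> (\<forall>p. pre_digraph.apath G s p t \<longrightarrow>
     (\<exists>i j. i \<le> j \<and> j < length p \<and> p ! i \<in> X \<and> p ! j \<in> Y))"

definition U :: "('a,'b) pre_digraph \<Rightarrow> 'a \<Rightarrow> 'a \<Rightarrow> nat \<Rightarrow> 'b set list set" where
  "U G s t k = {C. length C = k \<and> (\<forall>i<k. C ! i \<in> min_cuts G s t)}"

definition U_lr :: "('a,'b) pre_digraph \<Rightarrow> 'a \<Rightarrow> 'a \<Rightarrow> nat \<Rightarrow> 'b set list set" where
  "U_lr G s t k = {C \<in> U G s t k. \<forall>i j. i < j \<and> j < k \<longrightarrow> cut_le G s t (C ! i) (C ! j)}"

definition mult :: "'b set list \<Rightarrow> 'b \<Rightarrow> nat" where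
  "mult C e = card {i. i < length C \<and> e \<in> C ! i}"

end

theory Submission
  imports Defs
begin

definition dout :: "('a,'b) pre_digraph \<Rightarrow> 'a set \<Rightarrow> 'b set" where
  "dout G S = {e \<in> arcs G. tail G e \<in> S \<and> head G e \<notin> S}"

definition reach :: "('a,'b) pre_digraph \<Rightarrow> 'b set \<Rightarrow> 'a \<Rightarrow> 'a set" where
  "reach G X s = {v. \<exists>p. pre_digraph.awalk G s p v \<and> set p \<inter> X = {}}"

lemma card_ind_sum:
  "finite A \<Longrightarrow> (\<Sum>e\<in>A. if e \<in> X then 1 else (0::nat)) = card (A \<inter> X)"
  by (metis (no_types, lifting) ext card_eq_sum sum.inter_restrict)

lemma card_filter_sum: "card {i. i < (n::nat) \<and> P i} = (\<Sum>i<n. if i \<in> {i. P i} then 1 else (0::nat))"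
proof -
  have "{i. i < n \<and> P i} = {..<n} \<inter> {i. P i}" by auto
  moreover have f: "finite {..<n}" by simp
  ultimately show ?thesis using card_ind_sum[OF f, of "{i. P i}"] by simp
qed

lemma sum_mult:
  assumes "finite A" "\<forall>i<length L. L ! i \<subseteq> A"
  shows "(\<Sum>e\<in>A. mult L e) = (\<Sum>i<length L. card (L ! i))"
proof -
  have "(\<Sum>e\<in>A. mult L e) = (\<Sum>e\<in>A. \<Sum>i<length L. if e \<in> L ! i then 1 else (0::nat))"
    unfolding mult_def using card_filter_sum[where P = "\<lambda>i. _ \<in> L ! i"] by simp
  also have "\<dots> = (\<Sum>i<length L. \<Sum>e\<in>A. if e \<in> L ! i then 1 else (0::nat))"
    by (rule sum.swap)
  also have "\<dots> = (\<Sum>i<length L. card (A \<inter> L ! i))"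
    using card_ind_sum[OF assms(1)] by simp
  also have "\<dots> = (\<Sum>i<length L. card (L ! i))"
    using assms(2) by (intro sum.cong) (auto simp: Int_absorb1)
  finally show ?thesis .
qed

lemma sum_le_eq:
  fixes f g :: "'c \<Rightarrow> nat"
  assumes "finite A" "\<forall>x\<in>A. f x \<le> g x" "sum g A \<le> sum f A" "x \<in> A"
  shows "f x = g x"
proof (rule ccontr)
  assume "f x \<noteq> g x"
  then have "f x < g x" using assms by force
  then have "sum f A < sum g A" using assms by (intro sum_strict_mono_ex1) auto
  then show False using assms by simp
qed

context wf_digraph
begin

lemma walk_exit:
  "awalk u p v \<Longrightarrow> u \<in> S \<Longrightarrow> v \<notin> S \<Longrightarrow> \<exists>i<length p. tail G (p!i) \<in> S \<and> head G (p!i) \<notin> S"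
proof (induction p arbitrary: u)
  case Nil
  then show ?case by (simp add: awalk_Nil_iff)
next
  case (Cons e es)
  then have e: "e \<in> arcs G" "u = tail G e" "awalk (head G e) es v" by (auto simp: awalk_Cons_iff)
  show ?case
  proof (cases "head G e \<in> S")
    case True
    then obtain i where "i < length es" "tail G (es!i) \<in> S \<and> head G (es!i) \<notin> S"
      using Cons e by blast
    then show ?thesis by (intro exI[of _ "Suc i"]) auto
  next
    case False
    then show ?thesis using Cons e by (intro exI[of _ 0]) auto
  qed
qed

lemma walk_exit_before:
  "awalk u p v \<Longrightarrow> u \<in> S \<Longrightarrow> j < length p \<Longrightarrow> head G (p!j) \<notin> S \<Longrightarrow>
    \<exists>i\<le>j. tail G (p!i) \<in> S \<and> head G (p!i) \<notin> S"
proof (induction p arbitrary: u j)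
  case Nil
  then show ?case by simp
next
  case (Cons e es)
  then have e: "e \<in> arcs G" "u = tail G e" "awalk (head G e) es v" by (auto simp: awalk_Cons_iff)
  show ?case
  proof (cases "head G e \<in> S")
    case True
    have "j \<noteq> 0"
    proof
      assume "j = 0" then show False using Cons.prems True by simp
    qed
    then obtain j' where j': "j = Suc j'" by (cases j) auto
    have "j' < length es" using j' Cons.prems by simp
    moreover have "head G (es ! j') \<notin> S" using j' Cons.prems by simp
    ultimately obtain i where "i \<le> j'" "tail G (es!i) \<in> S \<and> head G (es!i) \<notin> S"
      using Cons.IH[OF e(3) True] by blast
    then show ?thesis using j' by (intro exI[of _ "Suc i"]) auto
  next
    case False
    then show ?thesis using Cons e by (intro exI[of _ 0]) auto
  qed
qed

lemma dout_cut:
  assumes "s \<in> S" "t \<notin> S"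
  shows "st_cut G s t (dout G S)"
  unfolding st_cut_def
proof (intro conjI allI impI)
  show "dout G S \<subseteq> arcs G" by (auto simp: dout_def)
  fix p assume "apath s p t"
  then have w: "awalk s p t" by (simp add: apath_def)
  then obtain i where "i < length p" "tail G (p!i) \<in> S \<and> head G (p!i) \<notin> S"
    using walk_exit assms by blast
  moreover have "p ! i \<in> arcs G" using w \<open>i < length p\<close> by (auto simp: awalk_def)
  ultimately have "p ! i \<in> set p \<inter> dout G S" by (auto simp: dout_def)
  then show "set p \<inter> dout G S \<noteq> {}" by blast
qed

lemma dout_le:
  assumes "S \<subseteq> S'" "s \<in> S" "t \<notin> S'"
  shows "cut_le G s t (dout G S) (dout G S')"
  unfolding cut_le_def
proof (intro allI impI)
  fix p assume ap: "apath s p t"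
  then have w: "awalk s p t" by (simp add: apath_def)
  have "st_cut G s t (dout G S')" using dout_cut assms by auto
  then have "set p \<inter> dout G S' \<noteq> {}" using ap by (auto simp: st_cut_def)
  then obtain j where j: "j < length p" "p ! j \<in> dout G S'" by (auto simp: in_set_conv_nth)
  then have "head G (p!j) \<notin> S" using assms by (auto simp: dout_def)
  then obtain i where i: "i \<le> j" "tail G (p!i) \<in> S \<and> head G (p!i) \<notin> S"
    using walk_exit_before[OF w assms(2) j(1)] by blast
  have "p ! i \<in> arcs G" using w i j by (auto simp: awalk_def)
  then have "p ! i \<in> dout G S" using i by (auto simp: dout_def)
  then show "\<exists>i j. i \<le> j \<and> j < length p \<and> p ! i \<in> dout G S \<and> p ! j \<in> dout G S'"
    using i j by blast
qed

end

context wf_digraph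
begin

lemma reach_props:
  assumes "st_cut G s t X" "s \<in> verts G"
  shows "s \<in> reach G X s" "t \<notin> reach G X s" "dout G (reach G X s) \<subseteq> X"
proof -
  show "s \<in> reach G X s" unfolding reach_def
    using assms(2) by (intro CollectI exI[of _ "[]"]) (simp add: awalk_Nil_iff)
  show "t \<notin> reach G X s"
  proof
    assume "t \<in> reach G X s"
    then obtain p where p: "awalk s p t" "set p \<inter> X = {}" by (auto simp: reach_def)
    have "apath s (awalk_to_apath p) t" using p(1) by (rule apath_awalk_to_apath)
    moreover have "set (awalk_to_apath p) \<inter> X = {}"
      using awalk_to_apath_subset[OF p(1)] p(2) by blast
    ultimately show False using assms(1) by (auto simp: st_cut_def)
  qed
  show "dout G (reach G X s) \<subseteq> X"
  proof
    fix e assume e: "e \<in> dout G (reach G X s)"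
    show "e \<in> X"
    proof (rule ccontr)
      assume ne: "e \<notin> X"
      from e obtain p where p: "awalk s p (tail G e)" "set p \<inter> X = {}" and
        ea: "e \<in> arcs G" and h: "head G e \<notin> reach G X s"
        by (auto simp: dout_def reach_def)
      have "awalk s (p @ [e]) (head G e)"
        by (rule awalk_appendI[OF p(1) arc_implies_awalk[OF ea]])
      moreover have "set (p @ [e]) \<inter> X = {}" using p(2) ne by auto
      ultimately have "head G e \<in> reach G X s" unfolding reach_def by blast
      then show False using h by simp
    qed
  qed
qed

end

theorem proposition1:
  fixes G :: "('a,'b) pre_digraph" and s t :: 'a and k :: nat
  assumes "fin_digraph G" and "s \<in> verts G" and "t \<in> verts G" and "k \<ge> 1"
    and "C \<in> U G s t k"
  shows "\<exists>C' \<in> U_lr G s t k. \<forall>e \<in> arcs G. mult C e = mult C' e"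
proof -
  interpret fin_digraph G by fact
  have lenC: "length C = k" and Cmin: "\<And>j. j < k \<Longrightarrow> C ! j \<in> min_cuts G s t"
    using assms(5) by (auto simp: U_def)
  define lam where "lam = card (C ! 0)"
  have C0: "C ! 0 \<in> min_cuts G s t" using Cmin assms(4) by auto
  have lam_le: "\<And>Y. st_cut G s t Y \<Longrightarrow> lam \<le> card Y"
    using C0 by (auto simp: lam_def min_cuts_def)
  have cardC: "\<And>j. j < k \<Longrightarrow> card (C ! j) = lam"
  proof -
    fix j assume "j < k"
    then have "C ! j \<in> min_cuts G s t" by (rule Cmin)
    then have "card (C ! j) \<le> lam" "lam \<le> card (C ! j)"
      using C0 lam_le by (auto simp: lam_def min_cuts_def)
    then show "card (C ! j) = lam" by simp
  qed
  have Ccut: "\<And>j. j < k \<Longrightarrow> st_cut G s t (C ! j)"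
    using Cmin by (auto simp: min_cuts_def)
  define R where "R j = reach G (C ! j) s" for j
  have Rs: "\<And>j. j < k \<Longrightarrow> s \<in> R j" and Rt: "\<And>j. j < k \<Longrightarrow> t \<notin> R j"
    and Rd: "\<And>j. j < k \<Longrightarrow> dout G (R j) \<subseteq> C ! j"
    using reach_props[OF Ccut assms(2)] by (auto simp: R_def)
  define cnt where "cnt v = card {j. j < k \<and> v \<in> R j}" for v
  have cnt_le: "\<And>v. cnt v \<le> k"
  proof -
    fix v
    have "{j. j < k \<and> v \<in> R j} \<subseteq> {..<k}" by auto
    then show "cnt v \<le> k" unfolding cnt_def using card_mono[of "{..<k}"] by fastforce
  qed
  have cnt_s: "cnt s = k"
  proof -
    have "{j. j < k \<and> s \<in> R j} = {..<k}" using Rs by auto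
    then show ?thesis by (simp add: cnt_def)
  qed
  have cnt_t: "cnt t = 0"
  proof -
    have "{j. j < k \<and> t \<in> R j} = {}" using Rt by auto
    then show ?thesis by (simp add: cnt_def)
  qed
  define S where "S i = {v. k - i \<le> cnt v}" for i
  define C' where "C' = map (\<lambda>i. dout G (S i)) [0..<k]"
  have lenC': "length C' = k" by (simp add: C'_def)
  have C'nth: "\<And>i. i < k \<Longrightarrow> C' ! i = dout G (S i)" by (simp add: C'_def)
  have Ss: "\<And>i. s \<in> S i" using cnt_s by (auto simp: S_def)
  have St: "\<And>i. i < k \<Longrightarrow> t \<notin> S i" using cnt_t by (auto simp: S_def)
  have C'cut: "\<And>i. i < k \<Longrightarrow> st_cut G s t (C' ! i)"
    using C'nth Ss St dout_cut by metis
  have fin: "finite (arcs G)" by simp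
  have multC': "mult C' e = cnt (tail G e) - cnt (head G e)" if "e \<in> arcs G" for e
  proof -
    let ?u = "cnt (tail G e)" and ?v = "cnt (head G e)"
    have "{i. i < length C' \<and> e \<in> C' ! i} = {k - ?u..<k - ?v}"
    proof -
      have "{i. i < length C' \<and> e \<in> C' ! i} = {i. i < k \<and> k - i \<le> ?u \<and> \<not> k - i \<le> ?v}"
        using lenC' C'nth that by (auto simp: dout_def S_def)
      also have "\<dots> = {k - ?u..<k - ?v}"
        using cnt_le[of "tail G e"] cnt_le[of "head G e"] by auto
      finally show ?thesis .
    qed
    then show ?thesis using cnt_le[of "tail G e"] cnt_le[of "head G e"] by (simp add: mult_def)
  qed
  have multC: "cnt (tail G e) - cnt (head G e) \<le> mult C e" if "e \<in> arcs G" for e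
  proof -
    let ?A = "{j. j < k \<and> tail G e \<in> R j}" and ?B = "{j. j < k \<and> head G e \<in> R j}"
    have "?A - ?B \<subseteq> {i. i < length C \<and> e \<in> C ! i}"
      using Rd that lenC by (auto simp: dout_def)
    then have "card (?A - ?B) \<le> mult C e" unfolding mult_def by (intro card_mono) auto
    moreover have "card ?A - card ?B \<le> card (?A - ?B)" by (intro diff_card_le_card_Diff) auto
    ultimately show ?thesis by (simp add: cnt_def)
  qed
  have pw: "\<forall>e\<in>arcs G. mult C' e \<le> mult C e" using multC multC' by simp
  have subC: "\<forall>i<length C. C ! i \<subseteq> arcs G" using Ccut lenC by (auto simp: st_cut_def)
  have subC': "\<forall>i<length C'. C' ! i \<subseteq> arcs G" using C'cut lenC' by (auto simp: st_cut_def)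
  have sumC: "(\<Sum>e\<in>arcs G. mult C e) = (\<Sum>i<k. lam)"
    using sum_mult[OF fin subC] lenC cardC by simp
  have sumC': "(\<Sum>e\<in>arcs G. mult C' e) = (\<Sum>i<k. card (C' ! i))"
    using sum_mult[OF fin subC'] lenC' by simp
  have sle: "(\<Sum>e\<in>arcs G. mult C' e) \<le> (\<Sum>e\<in>arcs G. mult C e)"
    using pw by (intro sum_mono) auto
  have lam_C': "\<forall>i\<in>{..<k}. lam \<le> card (C' ! i)" using lam_le C'cut by auto
  have cardC': "card (C' ! i) = lam" if "i < k" for i
    using sum_le_eq[of "{..<k}" "\<lambda>_. lam" "\<lambda>i. card (C' ! i)" i] lam_C' sle sumC sumC' that
    by auto
  have eqsum: "(\<Sum>e\<in>arcs G. mult C e) \<le> (\<Sum>e\<in>arcs G. mult C' e)"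
    using sumC sumC' cardC' by simp
  have eq: "\<forall>e\<in>arcs G. mult C e = mult C' e"
    using sum_le_eq[OF fin pw eqsum] by simp
  have C'min: "C' ! i \<in> min_cuts G s t" if "i < k" for i
    using C'cut[OF that] cardC'[OF that] lam_le by (auto simp: min_cuts_def)
  have C'U: "C' \<in> U G s t k" using lenC' C'min by (auto simp: U_def)
  have Smono: "S i \<subseteq> S j" if "i < j" for i j using that by (auto simp: S_def)
  have C'lr: "C' \<in> U_lr G s t k"
    unfolding U_lr_def using C'U C'nth Smono Ss St dout_le by auto
  show ?thesis using C'lr eq by blast
qed

end
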